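(* Let $s\in\{0,1\}$, $s'=1-s$, let $\mathbf{T}_s$ be any transport map from $\mathcal{P}_s$ to $\mathcal{P}_{s'}$, let $\delta\ge0$, and let $f:\mathcal{X}\times\{0,1\}\to[0,1]$ be a measurable model. If $\Delta\mathrm{MDP}(f,\mathbf{T}_s)\le\delta$, then $\Delta\mathrm{WDP}(f)\le\delta$ and $\Delta\overline{\mathrm{DP}}(f)\le\delta$.
   Context: Setting: $(\mathbf{X},Y,S)$ is a random tuple with $\mathbf{X}\in\mathcal{X}\subset\mathbb{R}^d$ and binary sensitive attribute $S\in\{0,1\}$; $\mathcal{P}_s$ is the conditional distribution of $\mathbf{X}$ given $S=s$ (assumed absolutely continuous w.r.t. Lebesgue measure), $\mathbb{E}_s$ its expectation. A transport map from $\mathcal{P}_s$ to $\mathcal{P}_{s'}$ is a map $\mathbf{T}$ with $\mathbf{T}_{\#}\mathcal{P}_s=\mathcal{P}_{s'}$. $\mathcal{P}_{f_s}$ is the distribution of $f(\mathbf{X},s)$ with $\mathbf{X}\sim\mathcal{P}_s$. Definitions: $\Delta\mathrm{MDP}(f,\mathbf{T}_s):=\mathbb{E}_s|f(\mathbf{X},s)-f(\mathbf{T}_s(\mathbf{X}),s')|$; $\Delta\mathrm{WDP}(f):=\mathcal{W}(\mathcal{P}_{f_0},\mathcal{P}_{f_1})$ where $\mathcal{W}$ is the 1-Wasserstein distance $\mathcal{W}(\mathcal{Q}_1,\mathcal{Q}_2)=\inf_{\gamma}\mathbb{E}_{(x,y)\sim\gamma}|x-y|$ over couplings $\gamma$ of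 $\mathcal{Q}_1,\mathcal{Q}_2$; $\Delta\overline{\mathrm{DP}}(f):=|\mathbb{E}(f(\mathbf{X},0)\mid S=0)-\mathbb{E}(f(\mathbf{X},1)\mid S=1)|$. *)

theory Defs
  imports "HOL-Probability.Probability"
begin

definition couplings :: "real measure \<Rightarrow> real measure \<Rightarrow> (real \<times> real) measure set" where
  "couplings Q1 Q2 = {\<gamma>. sets \<gamma> = sets borel \<and> prob_space \<gamma> \<and>
      distr \<gamma> borel fst = Q1 \<and> distr \<gamma> borel snd = Q2}"

definition wasserstein1 :: "real measure \<Rightarrow> real measure \<Rightarrow> ennreal" where
  "wasserstein1 Q1 Q2 = (INF \<gamma>\<in>couplings Q1 Q2. \<integral>\<^sup>+ z. ennreal \<bar>fst z - snd z\<bar> \<partial>\<gamma>)"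

definition model_distr :: "(nat \<Rightarrow> 'a measure) \<Rightarrow> ('a \<Rightarrow> nat \<Rightarrow> real) \<Rightarrow> nat \<Rightarrow> real measure" where
  "model_distr P f s = distr (P s) borel (\<lambda>x. f x s)"

definition DeltaMDP :: "(nat \<Rightarrow> 'a measure) \<Rightarrow> ('a \<Rightarrow> nat \<Rightarrow> real) \<Rightarrow> nat \<Rightarrow> ('a \<Rightarrow> 'a) \<Rightarrow> real" where
  "DeltaMDP P f s T = (\<integral>x. \<bar>f x s - f (T x) (1 - s)\<bar> \<partial>(P s))"

definition DeltaWDP :: "(nat \<Rightarrow> 'a measure) \<Rightarrow> ('a \<Rightarrow> nat \<Rightarrow> real) \<Rightarrow> ennreal" where
  "DeltaWDP P f = wasserstein1 (model_distr P f 0) (model_distr P f 1)"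

definition DeltaDPbar :: "(nat \<Rightarrow> 'a measure) \<Rightarrow> ('a \<Rightarrow> nat \<Rightarrow> real) \<Rightarrow> real" where
  "DeltaDPbar P f = \<bar>(\<integral>x. f x 0 \<partial>(P 0)) - (\<integral>x. f x 1 \<partial>(P 1))\<bar>"

end

theory Submission
  imports Defs
begin

lemma coupling_bound:
  fixes Q :: "'a measure" and h0 h1 :: "'a \<Rightarrow> real"
  assumes Qp: "prob_space Q"
    and m0: "h0 \<in> borel_measurable Q" and m1: "h1 \<in> borel_measurable Q"
  shows "wasserstein1 (distr Q borel h0) (distr Q borel h1)
           \<le> (\<integral>\<^sup>+ x. ennreal \<bar>h0 x - h1 x\<bar> \<partial>Q)"
proof -
  have mp: "(\<lambda>x. (h0 x, h1 x)) \<in> Q \<rightarrow>\<^sub>M (borel :: (real \<times> real) measure)"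
    using measurable_Pair[OF m0 m1] by (simp add: borel_prod)
  have mf: "fst \<in> (borel :: (real \<times> real) measure) \<rightarrow>\<^sub>M borel"
    using measurable_fst[of "borel::real measure" "borel::real measure"] by (simp add: borel_prod)
  have ms: "snd \<in> (borel :: (real \<times> real) measure) \<rightarrow>\<^sub>M borel"
    using measurable_snd[of "borel::real measure" "borel::real measure"] by (simp add: borel_prod)
  let ?g = "distr Q borel (\<lambda>x. (h0 x, h1 x))"
  have "?g \<in> couplings (distr Q borel h0) (distr Q borel h1)"
    unfolding couplings_def
  proof (intro CollectI conjI)
    show "sets ?g = sets borel" by simp
    show "prob_space ?g" using Qp mp by (simp add: prob_space.prob_space_distr)
    show "distr ?g borel fst = distr Q borel h0"
      using mp m0 mf by (subst distr_distr) (auto simp: comp_def)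
    show "distr ?g borel snd = distr Q borel h1"
      using mp m1 ms by (subst distr_distr) (auto simp: comp_def)
  qed
  hence "wasserstein1 (distr Q borel h0) (distr Q borel h1) \<le> (\<integral>\<^sup>+ z. ennreal \<bar>fst z - snd z\<bar> \<partial>?g)"
    unfolding wasserstein1_def by (rule INF_lower)
  also have "\<dots> = (\<integral>\<^sup>+ x. ennreal \<bar>h0 x - h1 x\<bar> \<partial>Q)"
    using mp by (subst nn_integral_distr) (auto intro!: borel_measurable_continuous_onI continuous_intros)
  finally show ?thesis .
qed

theorem mainTheorem5:
  fixes P :: "nat \<Rightarrow> ('a::euclidean_space) measure"
    and X :: "'a set"
    and f :: "'a \<Rightarrow> nat \<Rightarrow> real"
    and T :: "'a \<Rightarrow> 'a"
    and s :: nat and \<delta> :: real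
  assumes X_borel: "X \<in> sets borel"
    and P_prob: "\<And>r. r \<in> {0, 1} \<Longrightarrow> prob_space (P r)"
    and P_sets: "\<And>r. r \<in> {0, 1} \<Longrightarrow> sets (P r) = sets borel"
    and P_ac: "\<And>r. r \<in> {0, 1} \<Longrightarrow> absolutely_continuous lborel (P r)"
    and P_X: "\<And>r. r \<in> {0, 1} \<Longrightarrow> measure (P r) X = 1"
    and f_meas: "\<And>r. r \<in> {0, 1} \<Longrightarrow> (\<lambda>x. f x r) \<in> borel_measurable borel"
    and f_range: "\<And>x r. x \<in> X \<Longrightarrow> r \<in> {0, 1} \<Longrightarrow> f x r \<in> {0..1}"
    and s01: "s \<in> {0, 1}"
    and T_meas: "T \<in> borel_measurable borel"
    and T_push: "distr (P s) borel T = P (1 - s)"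
    and delta_nonneg: "\<delta> \<ge> 0"
    and MDP: "DeltaMDP P f s T \<le> \<delta>"
  shows "DeltaWDP P f \<le> ennreal \<delta> \<and> DeltaDPbar P f \<le> \<delta>"
proof -
  define s' where "s' = 1 - s"
  have s'01: "s' \<in> {0,1}" using s01 by (auto simp: s'_def)
  define Q where "Q = P s"
  have Qp: "prob_space Q" using P_prob s01 by (simp add: Q_def)
  interpret Q: prob_space Q by (rule Qp)
  have Qs: "sets Q = sets borel" using P_sets s01 by (simp add: Q_def)
  have Tm: "T \<in> Q \<rightarrow>\<^sub>M borel" using T_meas by (simp add: measurable_cong_sets[OF Qs refl])
  define g0 where "g0 = (\<lambda>x. f x s)"
  define g1 where "g1 = (\<lambda>x. f (T x) s')"
  have fm: "(\<lambda>x. f x r) \<in> Q \<rightarrow>\<^sub>M borel" if "r \<in> {0,1}" for r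
    using f_meas[OF that] by (simp add: measurable_cong_sets[OF Qs refl])
  have g0m: "g0 \<in> borel_measurable Q" using fm[OF s01] by (simp add: g0_def)
  have g1m: "g1 \<in> borel_measurable Q" unfolding g1_def
    using measurable_comp[OF Tm f_meas[OF s'01]] by (simp add: comp_def)
  have d0: "model_distr P f s = distr Q borel g0"
    by (simp add: model_distr_def Q_def g0_def)
  have d1: "model_distr P f s' = distr Q borel g1"
  proof -
    have "model_distr P f s' = distr (distr Q borel T) borel (\<lambda>x. f x s')"
      using T_push by (simp add: model_distr_def Q_def s'_def)
    also have "\<dots> = distr Q borel g1"
      using Tm f_meas[OF s'01] by (subst distr_distr) (auto simp: g1_def comp_def)
    finally show ?thesis .
  qed
  have aeX: "AE x in Q. x \<in> X"
    using Q.AE_prob_1 P_X s01 by (simp add: Q_def)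
  have aeTX: "AE x in Q. T x \<in> X"
  proof -
    have "measure Q (T -` X \<inter> space Q) = 1"
      using P_X[OF s'01] T_push Tm X_borel by (simp add: s'_def Q_def[symmetric] measure_distr[symmetric])
    hence "AE x in Q. x \<in> T -` X \<inter> space Q" by (rule Q.AE_prob_1)
    thus ?thesis by auto
  qed
  have b0: "AE x in Q. g0 x \<in> {0..1}" using aeX f_range s01 by (auto simp: g0_def)
  have b1: "AE x in Q. g1 x \<in> {0..1}" using aeTX f_range s'01 by (auto simp: g1_def)
  have i0: "integrable Q g0"
    by (rule Q.integrable_const_bound[where B=1]) (use b0 g0m in auto)
  have i1: "integrable Q g1"
    by (rule Q.integrable_const_bound[where B=1]) (use b1 g1m in auto)
  have idiff: "integrable Q (\<lambda>x. \<bar>g0 x - g1 x\<bar>)" using i0 i1 by auto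
  have mdp: "DeltaMDP P f s T = (\<integral>x. \<bar>g0 x - g1 x\<bar> \<partial>Q)"
    by (simp add: DeltaMDP_def Q_def g0_def g1_def s'_def)
  have nn: "(\<integral>\<^sup>+ x. ennreal \<bar>g0 x - g1 x\<bar> \<partial>Q) = ennreal (DeltaMDP P f s T)"
    using idiff mdp by (simp add: nn_integral_eq_integral)
  have w: "DeltaWDP P f \<le> ennreal (DeltaMDP P f s T)"
  proof (cases "s = 0")
    case True
    hence "DeltaWDP P f = wasserstein1 (distr Q borel g0) (distr Q borel g1)"
      using d0 d1 by (simp add: DeltaWDP_def s'_def)
    also have "\<dots> \<le> (\<integral>\<^sup>+ x. ennreal \<bar>g0 x - g1 x\<bar> \<partial>Q)"
      by (rule coupling_bound[OF Qp g0m g1m])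
    finally show ?thesis using nn by simp
  next
    case False
    hence "s = 1" "s' = 0" using s01 by (auto simp: s'_def)
    hence "DeltaWDP P f = wasserstein1 (distr Q borel g1) (distr Q borel g0)"
      using d0 d1 by (simp add: DeltaWDP_def)
    also have "\<dots> \<le> (\<integral>\<^sup>+ x. ennreal \<bar>g1 x - g0 x\<bar> \<partial>Q)"
      by (rule coupling_bound[OF Qp g1m g0m])
    also have "\<dots> = (\<integral>\<^sup>+ x. ennreal \<bar>g0 x - g1 x\<bar> \<partial>Q)"
      by (simp add: abs_minus_commute)
    finally show ?thesis using nn by simp
  qed
  have e0: "(\<integral>x. f x s \<partial>(P s)) = integral\<^sup>L Q g0" by (simp add: Q_def g0_def)
  have e1: "(\<integral>x. f x s' \<partial>(P s')) = integral\<^sup>L Q g1"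
  proof -
    have "(\<integral>x. f x s' \<partial>(P s')) = (\<integral>x. f x s' \<partial>(distr Q borel T))"
      using T_push by (simp add: Q_def s'_def)
    also have "\<dots> = integral\<^sup>L Q g1"
      using Tm f_meas[OF s'01] by (subst integral_distr) (auto simp: g1_def)
    finally show ?thesis .
  qed
  have "\<bar>integral\<^sup>L Q g0 - integral\<^sup>L Q g1\<bar> = \<bar>\<integral>x. g0 x - g1 x \<partial>Q\<bar>"
    using i0 i1 by simp
  also have "\<dots> \<le> (\<integral>x. \<bar>g0 x - g1 x\<bar> \<partial>Q)" by (rule integral_abs_bound)
  finally have dp: "\<bar>integral\<^sup>L Q g0 - integral\<^sup>L Q g1\<bar> \<le> DeltaMDP P f s T" using mdp by simp
  have "DeltaDPbar P f \<le> DeltaMDP P f s T"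
  proof (cases "s = 0")
    case True
    thus ?thesis using dp e0 e1 by (simp add: DeltaDPbar_def s'_def)
  next
    case False
    hence "s = 1" "s' = 0" using s01 by (auto simp: s'_def)
    thus ?thesis using dp e0 e1 by (simp add: DeltaDPbar_def abs_minus_commute)
  qed
  moreover have "ennreal (DeltaMDP P f s T) \<le> ennreal \<delta>" using MDP by (rule ennreal_leI)
  ultimately show ?thesis using w MDP by auto
qed

end
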